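(* Let $\mathcal{X}\subseteq\mathbb{R}^d$ be nonempty, closed and convex, let $f:\mathbb{R}^d\to\mathbb{R}$ be convex (not necessarily differentiable), and assume $\mathcal{X}_\star:=\operatorname{arg\,min}_{x\in\mathcal{X}}f(x)$ is nonempty. Assume there is $G>0$ with $\|g\|\le G$ for all $x\in\mathcal{X}$ and all $g\in\partial f(x)$. Let $x_\star\in\mathcal{X}_\star$ and $x_0\in\mathcal{X}$, and generate $\{x_k\}$ as follows: if $0\notin\partial f(x_k)$, pick $g_k\in\partial f(x_k)$, set $t_k:=\frac{f(x_k)-f(x_\star)}{\|g_k\|}$ and $x_{k+1}\in\operatorname{arg\,min}_{z\in\mathcal{X}\cap\mathcal{B}(x_k,t_k)}\langle g_k,z\rangle$; if $0\in\partial f(x_k)$, then $t_k=0$ and the method terminates. Then for every $K\ge1$, $$\frac1K\sum_{k=0}^{K-1}(f(x_k)-f(x_\star))^2\le\frac{G^2\|x_0-x_\star\|^2}{K},$$ and $\hat x_K:=\frac1K\sum_{k=0}^{K-1}x_k$ satisfies $f(\hat x_K)-f(x_\star)\le\frac{G\|x_0-x_\star\|}{\sqrt K}$.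
   Context: $\partial f(x)$ is the convex subdifferential of $f$ at $x$. $\|\cdot\|$ is the Euclidean norm, $\mathcal{B}(x,t):=\{y:\|y-x\|\le t\}$. With $t_k=0$ the feasible set is $\{x_k\}$, so a terminated run stays at $x_k$. *)

theory Defs
  imports "HOL-Analysis.Analysis"
begin

definition subdiff :: "('a::real_inner \<Rightarrow> real) \<Rightarrow> 'a \<Rightarrow> 'a set" where
  "subdiff f x = {g. \<forall>y. f y \<ge> f x + inner g (y - x)}"

definition argmin_on :: "('a \<Rightarrow> real) \<Rightarrow> 'a set \<Rightarrow> 'a set" where
  "argmin_on h S = {x \<in> S. \<forall>y \<in> S. h x \<le> h y}"

end

theory Submission
  imports Defs
begin

lemma real_aux:
  fixes A B C E :: real
  assumes "B \<le> A" "E \<ge> 0"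
    and H: "\<And>d. 0 < d \<Longrightarrow> d \<le> 1 \<Longrightarrow> A < B + 2*d*C + d^2*E"
  shows "A \<le> B + 2*C"
proof -
  have C: "C \<ge> 0"
  proof (rule ccontr)
    assume "\<not> C \<ge> 0"
    hence Cn: "C < 0" by simp
    define d where "d = min 1 (-C/(E+1))"
    have "C/(E+1) < 0" using Cn assms(2) by (simp add: divide_neg_pos)
    hence d0: "0 < d" "d \<le> 1" by (auto simp: d_def)
    have "d * E \<le> -C"
    proof -
      have "d \<le> -C/(E+1)" by (simp add: d_def)
      moreover have "E + 1 > 0" using assms(2) by simp
      ultimately have "d*(E+1) \<le> -C" using pos_le_divide_eq[of "E+1" d "-C"] by simp
      thus ?thesis using d0 by (simp add: algebra_simps)
    qed
    hence "(C + d*E)*d \<le> 0" using d0 by (intro mult_nonpos_nonneg) auto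
    hence "2*d*C + d^2*E \<le> d*C" by (simp add: power2_eq_square algebra_simps)
    moreover have "d*C < 0" using d0 Cn by (simp add: mult_pos_neg)
    ultimately show False using H[OF d0] assms(1) by linarith
  qed
  have "A \<le> B"
  proof (rule ccontr)
    assume "\<not> A \<le> B"
    hence p: "A - B > 0" by simp
    define d where "d = min 1 ((A-B)/(2*C+E+1))"
    have d0: "0 < d" "d \<le> 1" using p C assms(2) by (auto simp: d_def)
    have "d*(2*C+E+1) \<le> A - B"
    proof -
      have "d \<le> (A-B)/(2*C+E+1)" by (simp add: d_def)
      thus ?thesis using C assms(2) by (simp add: pos_le_divide_eq)
    qed
    moreover have "d^2*E \<le> d*E" using d0 assms(2)
      by (simp add: power2_eq_square mult_right_mono)
    ultimately have "2*d*C + d^2*E < A - B" using d0 by (simp add: algebra_simps)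
    thus False using H[OF d0] by linarith
  qed
  thus ?thesis using C by linarith
qed

lemma step_lemma:
  fixes a y w g :: "'a::real_inner"
  assumes cX: "convex X" and wX: "w \<in> X"
    and y: "y \<in> argmin_on (\<lambda>z. inner g z) (X \<inter> cball a t)"
    and gw: "inner g (w - a) \<le> - t * norm g" and g0: "g \<noteq> 0" and t0: "t \<ge> 0"
  shows "(norm (y - w))^2 \<le> (norm (a - w))^2 - t^2"
proof -
  have yX: "y \<in> X" and yb: "norm (y - a) \<le> t"
    and ymin: "\<And>z. z \<in> X \<Longrightarrow> norm (z - a) \<le> t \<Longrightarrow> inner g y \<le> inner g z"
    using y by (auto simp: argmin_on_def dist_norm norm_minus_commute)
  define v where "v = y - a"
  define e where "e = w - y"
  have D: "(norm (a - w))^2 = (norm v)^2 + 2 * inner v e + (norm e)^2"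
  proof -
    have "a - w = -(v + e)" by (simp add: v_def e_def)
    hence "norm (a - w) = norm (v + e)" by (simp only: norm_minus_cancel)
    thus ?thesis by (simp add: power2_norm_eq_inner inner_add_left inner_add_right inner_commute)
  qed
  show ?thesis
  proof (cases "inner g w < inner g y")
    case True
    have "t^2 \<le> (norm v)^2 + 2 * inner v e"
    proof (rule real_aux)
      show "(norm v)^2 \<le> t^2" using yb t0 by (simp add: v_def power_mono)
      show "(norm e)^2 \<ge> 0" by simp
      fix d :: real assume d: "0 < d" "d \<le> 1"
      define p where "p = y + d *\<^sub>R e"
      have "p = (1 - d) *\<^sub>R y + d *\<^sub>R w" by (simp add: p_def e_def algebra_simps)
      hence pX: "p \<in> X" using cX yX wX d by (simp add: convex_def)
      have "inner g p = inner g y + d * (inner g w - inner g y)"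
        by (simp add: p_def e_def inner_add_right inner_diff_right)
      hence "inner g p < inner g y" using True d by (simp add: mult_pos_neg)
      hence "\<not> norm (p - a) \<le> t" using ymin[OF pX] by linarith
      hence "t < norm (p - a)" by simp
      hence "t^2 < (norm (p - a))^2" using t0 by (simp add: power_strict_mono)
      moreover have "p - a = v + d *\<^sub>R e" by (simp add: p_def v_def)
      moreover have "(norm (v + d *\<^sub>R e))^2 = (norm v)^2 + 2 * d * inner v e + d^2 * (norm e)^2"
        unfolding power2_norm_eq_inner
        by (simp add: inner_add_left inner_add_right inner_commute power2_eq_square algebra_simps)
      ultimately show "t^2 < (norm v)^2 + 2 * d * inner v e + d^2 * (norm e)^2"
        by simp
    qed
    moreover have "y - w = - e" by (simp add: e_def)
    ultimately show ?thesis using D by simp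
  next
    case False
    define u where "u = (1 / norm g) *\<^sub>R g"
    have ng: "norm g > 0" using g0 by simp
    have un: "norm u = 1" using g0 by (simp add: u_def)
    have "inner g v \<le> inner g (w - a)" using False by (simp add: v_def inner_diff_right)
    hence "inner g v \<le> - t * norm g" using gw by linarith
    hence vu: "inner v u \<le> - t" using ng
      by (simp add: u_def inner_commute divide_simps)
    have "(norm (v + t *\<^sub>R u))^2 = (norm v)^2 + 2 * t * inner v u + t^2"
    proof -
      have uu: "inner u u = 1" using un by (metis power2_norm_eq_inner power_one)
      show ?thesis unfolding power2_norm_eq_inner
        by (simp add: inner_add_left inner_add_right inner_commute power2_eq_square uu algebra_simps)
    qed
    also have "\<dots> \<le> t^2 - 2*t*t + t^2"
    proof -
      have "(norm v)^2 \<le> t^2" using yb t0 by (simp add: v_def power_mono)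
      moreover have "2 * t * inner v u \<le> 2 * t * (-t)" using mult_left_mono[OF vu t0] by simp
      ultimately show ?thesis by simp
    qed
    also have "\<dots> = 0" by (simp add: power2_eq_square)
    finally have "v = - t *\<^sub>R u" by (simp add: eq_neg_iff_add_eq_0)
    have uw: "inner u (w - a) \<le> - t" using gw ng
      by (simp add: u_def divide_simps)
    have "y - w = v - (w - a)" by (simp add: v_def)
    hence "(norm (y - w))^2 = (norm (v - (w - a)))^2" by (simp only:)
    also have "\<dots> = (norm v)^2 - 2 * inner v (w - a) + (norm (w - a))^2"
      unfolding power2_norm_eq_inner by (simp add: inner_diff_left inner_diff_right inner_commute)
    also have "(norm v)^2 = t^2" using \<open>v = - t *\<^sub>R u\<close> un t0 by simp
    also have "inner v (w - a) = - t * inner u (w - a)" using \<open>v = - t *\<^sub>R u\<close> by simp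
    also have "norm (w - a) = norm (a - w)" by (simp add: norm_minus_commute)
    finally have "(norm (y - w))^2 = t^2 + 2 * t * inner u (w - a) + (norm (a - w))^2" by simp
    moreover have "2 * t * inner u (w - a) \<le> 2 * t * (-t)" using mult_left_mono[OF uw t0] by simp
    ultimately show ?thesis by (simp add: power2_eq_square)
  qed
qed

theorem theorem6:
  fixes X :: "(real ^ 'n) set" and f :: "real ^ 'n \<Rightarrow> real"
    and G :: real and xs :: "real ^ 'n"
    and x g :: "nat \<Rightarrow> real ^ 'n"
  assumes X_ne: "X \<noteq> {}" and X_closed: "closed X" and X_convex: "convex X"
    and f_convex: "convex_on UNIV f"
    and argmin_ne: "argmin_on f X \<noteq> {}"
    and G_pos: "G > 0"
    and G_bound: "\<And>y v. y \<in> X \<Longrightarrow> v \<in> subdiff f y \<Longrightarrow> norm v \<le> G"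
    and xs_opt: "xs \<in> argmin_on f X"
    and x0: "x 0 \<in> X"
    and step: "\<And>k. 0 \<notin> subdiff f (x k) \<Longrightarrow>
        g k \<in> subdiff f (x k) \<and>
        x (Suc k) \<in> argmin_on (\<lambda>z. inner (g k) z)
           (X \<inter> cball (x k) ((f (x k) - f xs) / norm (g k)))"
    and stop: "\<And>k. 0 \<in> subdiff f (x k) \<Longrightarrow> x (Suc k) = x k"
  shows "\<forall>K::nat. K \<ge> 1 \<longrightarrow>
      (1 / real K) * (\<Sum>k<K. (f (x k) - f xs)^2) \<le> G^2 * (norm (x 0 - xs))^2 / real K
    \<and> f ((1 / real K) *\<^sub>R (\<Sum>k<K. x k)) - f xs \<le> G * norm (x 0 - xs) / sqrt (real K)"
proof -
  have fstar: "\<And>z. z \<in> X \<Longrightarrow> f xs \<le> f z" and xsX: "xs \<in> X"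
    using xs_opt by (auto simp: argmin_on_def)
  have inX: "x k \<in> X" for k
  proof (induction k)
    case 0 show ?case by (rule x0)
  next
    case (Suc k)
    show ?case
    proof (cases "0 \<in> subdiff f (x k)")
      case True thus ?thesis using stop Suc by simp
    next
      case False thus ?thesis using step[OF False] by (auto simp: argmin_on_def)
    qed
  qed
  have dec: "(f (x k) - f xs)^2 / G^2 \<le> (norm (x k - xs))^2 - (norm (x (Suc k) - xs))^2" for k
  proof (cases "0 \<in> subdiff f (x k)")
    case True
    hence "f (x k) \<le> f xs" by (auto simp: subdiff_def)
    moreover have "f xs \<le> f (x k)" using fstar inX by blast
    ultimately show ?thesis using stop[OF True] by simp
  next
    case False
    define t where "t = (f (x k) - f xs) / norm (g k)"
    have gk: "g k \<in> subdiff f (x k)" and xk1: "x (Suc k) \<in> argmin_on (\<lambda>z. inner (g k) z)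
           (X \<inter> cball (x k) t)" using step[OF False] by (auto simp: t_def)
    have g0: "g k \<noteq> 0" using gk False by auto
    have ng: "norm (g k) > 0" using g0 by simp
    have gG: "norm (g k) \<le> G" using G_bound[OF inX gk] .
    have fk: "f xs \<le> f (x k)" using fstar inX by blast
    have t0: "t \<ge> 0" using fk ng by (simp add: t_def)
    have "f xs \<ge> f (x k) + inner (g k) (xs - x k)" using gk by (auto simp: subdiff_def)
    moreover have "t * norm (g k) = f (x k) - f xs" using ng by (simp add: t_def)
    ultimately have gw: "inner (g k) (xs - x k) \<le> - t * norm (g k)" by linarith
    have "(norm (x (Suc k) - xs))^2 \<le> (norm (x k - xs))^2 - t^2"
      by (rule step_lemma[OF X_convex xsX xk1 gw g0 t0])
    moreover have "(f (x k) - f xs)^2 / G^2 \<le> t^2"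
    proof -
      have "t^2 = (f (x k) - f xs)^2 / (norm (g k))^2" by (simp add: t_def power_divide)
      moreover have "(norm (g k))^2 \<le> G^2" using gG ng by (simp add: power_mono)
      moreover have "(norm (g k))^2 > 0" using ng by simp
      ultimately show ?thesis using divide_left_mono[of "(norm (g k))^2" "G^2" "(f (x k) - f xs)^2"]
        using G_pos ng by simp
    qed
    ultimately show ?thesis by linarith
  qed
  have tele: "(\<Sum>k<K. (f (x k) - f xs)^2 / G^2) \<le> (norm (x 0 - xs))^2 - (norm (x K - xs))^2" for K
  proof (induction K)
    case 0 show ?case by simp
  next
    case (Suc K) thus ?case using dec[of K] by simp
  qed
  have sumb: "(\<Sum>k<K. (f (x k) - f xs)^2) \<le> G^2 * (norm (x 0 - xs))^2" for K
  proof -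
    have "(\<Sum>k<K. (f (x k) - f xs)^2 / G^2) \<le> (norm (x 0 - xs))^2"
      using tele[of K] zero_le_power2[of "norm (x K - xs)"] by linarith
    hence "(\<Sum>k<K. (f (x k) - f xs)^2) / G^2 \<le> (norm (x 0 - xs))^2" by (simp add: sum_divide_distrib)
    thus ?thesis using G_pos by (simp add: divide_le_eq mult.commute)
  qed
  show ?thesis
  proof (intro allI impI conjI)
    fix K :: nat assume K: "K \<ge> 1"
    hence Kp: "real K > 0" by simp
    show "(1 / real K) * (\<Sum>k<K. (f (x k) - f xs)^2) \<le> G^2 * (norm (x 0 - xs))^2 / real K"
      using sumb[of K] Kp by (simp add: divide_right_mono)
    have "f ((1 / real K) *\<^sub>R (\<Sum>k<K. x k)) = f (\<Sum>k<K. (1 / real K) *\<^sub>R x k)"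
      by (simp add: scaleR_sum_right)
    also have "\<dots> \<le> (\<Sum>k<K. (1 / real K) * f (x k))"
    proof (rule convex_on_sum[OF _ _ f_convex])
      have "0 \<in> {..<K}" using K by simp
      thus "{..<K} \<noteq> {}" by blast
      show "(\<Sum>i<K. 1 / real K) = 1" using Kp by simp
    qed auto
    also have "\<dots> = (1 / real K) * (\<Sum>k<K. f (x k))" by (simp add: sum_distrib_left)
    finally have J: "f ((1 / real K) *\<^sub>R (\<Sum>k<K. x k)) - f xs \<le> (\<Sum>k<K. f (x k) - f xs) / real K"
      using Kp by (simp add: sum_subtractf field_simps)
    define S where "S = (\<Sum>k<K. f (x k) - f xs)"
    have S0: "S \<ge> 0" unfolding S_def using fstar inX by (intro sum_nonneg) (simp add: fstar inX)
    have "S^2 \<le> (\<Sum>k<K. (f (x k) - f xs)^2) * real K"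
      unfolding S_def using sum_squared_le_sum_of_squares[of "\<lambda>k. f (x k) - f xs" "{..<K}"] by simp
    also have "\<dots> \<le> G^2 * (norm (x 0 - xs))^2 * real K" using sumb[of K] Kp by simp
    also have "\<dots> = (G * norm (x 0 - xs) * sqrt (real K))^2"
      by (simp add: power_mult_distrib)
    finally have sq: "S^2 \<le> (G * norm (x 0 - xs) * sqrt (real K))^2" .
    have "0 \<le> G * norm (x 0 - xs) * sqrt (real K)" using G_pos by simp
    hence "S \<le> G * norm (x 0 - xs) * sqrt (real K)" using power2_le_imp_le[OF sq] by blast
    hence "S / real K \<le> G * norm (x 0 - xs) * sqrt (real K) / real K"
      using Kp by (simp add: divide_right_mono)
    also have "\<dots> = G * norm (x 0 - xs) / sqrt (real K)"
    proof -
      have "sqrt (real K) * sqrt (real K) = real K" using Kp by simp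
      hence "sqrt (real K) / real K = 1 / sqrt (real K)" using Kp
        by (metis div_self less_numeral_extra(3) nonzero_mult_div_cancel_left real_sqrt_gt_0_iff times_divide_eq_right)
      thus ?thesis by (metis times_divide_eq_right mult_1_right)
    qed
    finally show "f ((1 / real K) *\<^sub>R (\<Sum>k<K. x k)) - f xs \<le> G * norm (x 0 - xs) / sqrt (real K)"
      using J by (simp add: S_def)
  qed
qed

end
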